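(* If $\lambda$ is weakly compact, then $\lambda$ satisfies the strong system property.
   Context: Let $\lambda$ be an infinite regular cardinal. A relation $R$ is tree-like if $a<_R c$ and $b<_R c$ imply $a,b$ are $R$-comparable ($a=b$, $a<_Rb$ or $b<_Ra$). A $\lambda$-system is $S=\langle\{\{\alpha\}\times\kappa_\alpha\mid\alpha\in I\},\mathcal{R}\rangle$ with $I\subseteq\lambda$ unbounded, $0<\kappa_\alpha<\lambda$, levels $S_\alpha=\{\alpha\}\times\kappa_\alpha$ (and $S$ also denotes their union), $\mathcal{R}$ a set of binary transitive tree-like relations on $S$ with $|\mathcal{R}|<\lambda$, such that $(\alpha_0,\beta_0)<_R(\alpha_1,\beta_1)$ implies $\alpha_0<\alpha_1$, and for all $\alpha_0<\alpha_1$ in $I$ some elements of $S_{\alpha_0}$, $S_{\alpha_1}$ are related by some $R\in\mathcal{R}$. It is strong if for all $\alpha_0<\alpha_1$ in $I$ and every $\beta_1<\kappa_{\alpha_1}$ there are $\beta_0<\kappa_{\alpha_0}$ and $R\in\mathcal{R}$ with $(\alpha_0,\beta_0)<_R(\alpha_1,\beta_1)$. $\langle I\times\kappa,\mathcal{R}\rangle$ denotes a system with all $\kappa_\alpha=\kappa$. A branch through $R$ is a set of pairwise $R$-comparable elements; it is cofinal if it meets $S_\alpha$ for unboundedly many $\alpha\in I$. $\lambda$ satisfies the strong system property if every strong $\lambda$-system $S=\langle I\times\kappa,\mathcal{R}\rangle$ with $|\mathcal{R}|^+<\lambda$ has a cofinal branch. *)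

theory Defs
  imports Main
begin

unbundle cardinal_syntax

text \<open>Cardinals are represented by cardinal orders (well-orders of ordinals
below the cardinal), as in BNF_Cardinal_Order_Relation.  A cardinal lambda is a
relation r with Card_order r; the ordinals below lambda are the elements of
Field r, ordered by r (reflexive well-order).\<close>

definition weakly_compact :: "'a rel \<Rightarrow> bool" where
  "weakly_compact r \<longleftrightarrow>
     Card_order r \<and> natLeq <o r \<and>
     (\<forall>f :: 'a set \<Rightarrow> bool. \<exists>H. H \<subseteq> Field r \<and> |H| =o r \<and>
        (\<exists>c. \<forall>x\<in>H. \<forall>y\<in>H. x \<noteq> y \<longrightarrow> f {x, y} = c))"

definition tree_like :: "'b rel \<Rightarrow> bool" where
  "tree_like R \<longleftrightarrow> (\<forall>a b c. (a, c) \<in> R \<and> (b, c) \<in> R \<longrightarrow> a = b \<or> (a, b) \<in> R \<or> (b, a) \<in> R)"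

definition oless :: "'a rel \<Rightarrow> 'a \<Rightarrow> 'a \<Rightarrow> bool" where
  "oless r a b \<longleftrightarrow> (a, b) \<in> r \<and> a \<noteq> b"

text \<open>The strong lambda-system  \<langle>I \<times> kappa, RR\<rangle>  where kappa is an ordinal
(an element of Field r, i.e. kappa < lambda) which is a nonzero cardinal; the
ordinals below kappa are underS r k.\<close>
definition strong_system :: "'a rel \<Rightarrow> 'a set \<Rightarrow> 'a \<Rightarrow> (('a \<times> 'a) rel) set \<Rightarrow> bool" where
  "strong_system r I k RR \<longleftrightarrow>
     I \<subseteq> Field r \<and> (\<forall>\<gamma>\<in>Field r. \<exists>\<alpha>\<in>I. (\<gamma>, \<alpha>) \<in> r) \<and>
     k \<in> Field r \<and> underS r k \<noteq> {} \<and> Card_order (Restr r (underS r k)) \<and>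
     |RR| <o r \<and>
     (\<forall>R\<in>RR. R \<subseteq> (I \<times> underS r k) \<times> (I \<times> underS r k) \<and> trans R \<and> tree_like R \<and>
        (\<forall>x y. (x, y) \<in> R \<longrightarrow> oless r (fst x) (fst y))) \<and>
     (\<forall>\<alpha>0\<in>I. \<forall>\<alpha>1\<in>I. oless r \<alpha>0 \<alpha>1 \<longrightarrow>
        (\<exists>\<beta>0\<in>underS r k. \<exists>\<beta>1\<in>underS r k. \<exists>R\<in>RR. ((\<alpha>0, \<beta>0), (\<alpha>1, \<beta>1)) \<in> R)) \<and>
     (\<forall>\<alpha>0\<in>I. \<forall>\<alpha>1\<in>I. oless r \<alpha>0 \<alpha>1 \<longrightarrow> (\<forall>\<beta>1\<in>underS r k.
        (\<exists>\<beta>0\<in>underS r k. \<exists>R\<in>RR. ((\<alpha>0, \<beta>0), (\<alpha>1, \<beta>1)) \<in> R)))"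

definition cofinal_branch :: "'a rel \<Rightarrow> 'a set \<Rightarrow> 'a \<Rightarrow> ('a \<times> 'a) rel \<Rightarrow> ('a \<times> 'a) set \<Rightarrow> bool" where
  "cofinal_branch r I k R b \<longleftrightarrow>
     b \<subseteq> I \<times> underS r k \<and>
     (\<forall>x\<in>b. \<forall>y\<in>b. x = y \<or> (x, y) \<in> R \<or> (y, x) \<in> R) \<and>
     (\<forall>\<gamma>\<in>Field r. \<exists>x\<in>b. (\<gamma>, fst x) \<in> r)"

definition strong_system_property :: "'a rel \<Rightarrow> bool" where
  "strong_system_property r \<longleftrightarrow>
     (\<forall>I k (RR :: (('a \<times> 'a) rel) set).
        strong_system r I k RR \<and> cardSuc |RR| <o r \<longrightarrow>
        (\<exists>R\<in>RR. \<exists>b. cofinal_branch r I k R b))"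

end

theory Submission
  imports Defs
begin
unbundle cardinal_syntax

lemma times_small:
  assumes INF: "\<not>finite (Field r)" and r: "Card_order r" and
    L1: "|A| <o r" and L2: "|B| <o r" and NE: "A \<noteq> {}" "B \<noteq> {}"
  shows "|A \<times> B| <o r"
proof -
  let ?C = "Field r"
  have 1: "r =o |?C| \<and> |?C| =o r" using r card_of_Field_ordIso
      ordIso_symmetric by blast
  hence LESS1: "|A| <o |?C|" and LESS2: "|B| <o |?C|"
    using L1 L2 ordLess_ordIso_trans by blast+
  have "|A \<times> B| <o |?C|"
  proof -
  {assume *: "|?C| \<le>o |A \<times> B|"
    hence "\<not>finite (A \<times> B)" using INF card_of_ordLeq_finite by blast
    hence 1: "\<not>finite A \<or> \<not>finite B" using finite_cartesian_product by blast
    {assume Case21: "|A| \<le>o |B|" 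
      hence "\<not>finite B" using 1 card_of_ordLeq_finite by blast
      hence "|A \<times> B| =o |B|" using NE Case21
        by (auto simp: card_of_Times_infinite)
      hence False using LESS2 not_ordLess_ordLeq * ordLeq_ordIso_trans by blast
    }
    moreover
    {assume Case22: "|B| \<le>o |A|"
      hence "\<not>finite A" using 1 card_of_ordLeq_finite by blast
      hence "|A \<times> B| =o |A|" using NE Case22
        by (auto simp: card_of_Times_infinite)
      hence False using LESS1 not_ordLess_ordLeq * ordLeq_ordIso_trans by blast
    }
    ultimately have False using ordLeq_total card_of_Well_order[of A]
        card_of_Well_order[of B] by blast
  }
  thus ?thesis using ordLess_or_ordLeq[of "|A \<times> B|" "|?C|"]
      card_of_Well_order[of "A \<times> B"] card_of_Well_order[of "?C"] by auto
  qed
  thus ?thesis using 1 ordLess_ordIso_trans by blast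
qed

definition unb :: "'a rel \<Rightarrow> 'a set \<Rightarrow> bool" where
  "unb r X \<longleftrightarrow> (\<forall>\<xi>\<in>Field r. \<exists>x\<in>X. oless r \<xi> x)"

locale cardctx =
  fixes r :: "'a rel"
  assumes CO: "Card_order r" and CI: "cinfinite r" and REG: "regularCard r"
begin

lemma WO: "Well_order r" using CO card_order_on_well_order_on by blast

lemma rtrans: "(a,b)\<in>r \<Longrightarrow> (b,c)\<in>r \<Longrightarrow> (a,c)\<in>r"
  using WO unfolding well_order_on_def linear_order_on_def partial_order_on_def preorder_on_def trans_def by blast
lemma rantisym: "(a,b)\<in>r \<Longrightarrow> (b,a)\<in>r \<Longrightarrow> a=b"
  using WO unfolding well_order_on_def linear_order_on_def partial_order_on_def antisym_def by blast
lemma rrefl: "a \<in> Field r \<Longrightarrow> (a,a)\<in>r"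
  using WO unfolding well_order_on_def linear_order_on_def partial_order_on_def preorder_on_def refl_on_def by blast
lemma rtotal: "a\<in>Field r \<Longrightarrow> b\<in>Field r \<Longrightarrow> (a,b)\<in>r \<or> (b,a)\<in>r"
proof -
  assume a: "a\<in>Field r" "b\<in>Field r"
  show ?thesis
  proof (cases "a = b")
    case True thus ?thesis using rrefl a by blast
  next
    case False
    have "total_on (Field r) r" using WO unfolding well_order_on_def linear_order_on_def by blast
    thus ?thesis using False a unfolding total_on_def by blast
  qed
qed

lemma oless_trans1: "(a,b)\<in>r \<Longrightarrow> oless r b c \<Longrightarrow> oless r a c"
  unfolding oless_def using rtrans rantisym by blast
lemma oless_trans2: "oless r a b \<Longrightarrow> (b,c)\<in>r \<Longrightarrow> oless r a c"
  unfolding oless_def using rtrans rantisym by blast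
lemma not_oless: "a\<in>Field r \<Longrightarrow> b\<in>Field r \<Longrightarrow> \<not> oless r a b \<Longrightarrow> (b,a)\<in>r"
  unfolding oless_def using rtotal rrefl by blast
lemma oless_Field: "oless r a b \<Longrightarrow> a\<in>Field r \<and> b \<in> Field r"
  unfolding oless_def by (auto intro: FieldI1 FieldI2)
lemma rmax: "a\<in>Field r \<Longrightarrow> b\<in>Field r \<Longrightarrow> \<exists>m\<in>Field r. (a,m)\<in>r \<and> (b,m)\<in>r"
  using rtotal rrefl by blast

lemma bound: "K \<subseteq> Field r \<Longrightarrow> |K| <o r \<Longrightarrow> \<exists>a\<in>Field r. \<forall>b\<in>K. (b,a)\<in>r"
proof -
  assume K: "K \<subseteq> Field r" "|K| <o r"
  have "\<not> cofinal K r"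
    using REG K not_ordLess_ordIso unfolding regularCard_def by blast
  then obtain a where a: "a \<in> Field r" "\<forall>b\<in>K. a = b \<or> (a,b) \<notin> r"
    unfolding cofinal_def by blast
  show ?thesis
  proof (intro bexI[OF _ a(1)] ballI)
    fix b assume "b \<in> K"
    hence "b \<in> Field r" "a = b \<or> (a,b) \<notin> r" using K a by auto
    thus "(b,a) \<in> r" using rrefl rtotal a by blast
  qed
qed

lemma no_max: "a\<in>Field r \<Longrightarrow> \<exists>b. oless r a b"
proof (rule ccontr)
  assume a: "a \<in> Field r" and n: "\<nexists>b. oless r a b"
  have "Field r \<subseteq> {a} \<union> underS r a"
    using n not_oless a unfolding underS_def by blast
  moreover have "|{a}| <o r"
  proof -
    have "Well_order |{a}|" by (rule card_of_Well_order)
    moreover have "finite (Field (card_of {a}))" by (simp add: Field_card_of)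
    ultimately show ?thesis using finite_ordLess_infinite[of "|{a}|" r] WO CI
      unfolding cinfinite_def by blast
  qed
  moreover have "|underS r a| <o r" by (rule card_of_underS[OF CO a])
  ultimately have "|{a} \<union> underS r a| <o r"
    using card_of_Un_ordLess_infinite_Field CI CO unfolding cinfinite_def by blast
  hence "|Field r| <o r"
    using \<open>Field r \<subseteq> {a} \<union> underS r a\<close> card_of_mono1 ordLeq_ordLess_trans by blast
  thus False using card_of_Field_ordIso CO not_ordLess_ordIso by blast
qed

lemma unb_card: "H \<subseteq> Field r \<Longrightarrow> |H| =o r \<Longrightarrow> unb r H"
proof (rule ccontr)
  assume H: "H \<subseteq> Field r" "|H| =o r" "\<not> unb r H"
  then obtain \<xi> where x: "\<xi> \<in> Field r" "\<forall>h\<in>H. \<not> oless r \<xi> h" unfolding unb_def by blast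
  obtain \<xi>' where x': "oless r \<xi> \<xi>'" using no_max x by blast
  have "H \<subseteq> underS r \<xi>'"
  proof
    fix h assume "h \<in> H"
    hence "(h,\<xi>) \<in> r" using x H not_oless by blast
    hence "oless r h \<xi>'" using oless_trans1 x' by blast
    thus "h \<in> underS r \<xi>'" unfolding oless_def underS_def by blast
  qed
  hence "|H| \<le>o |underS r \<xi>'|" by (rule card_of_mono1)
  moreover have "|underS r \<xi>'| <o r" by (rule card_of_underS[OF CO conjunct2[OF oless_Field[OF x']]])
  ultimately have "|H| <o r" by (rule ordLeq_ordLess_trans)
  thus False using H not_ordLess_ordIso by blast
qed

lemma pigeon:
  assumes X: "unb r X" "X \<subseteq> Field r" and g: "g ` X \<subseteq> V" and V: "|V| <o r"
  shows "\<exists>v\<in>V. unb r {x\<in>X. g x = v}"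
proof (rule ccontr)
  assume NT: "\<not> ?thesis"
  have "\<forall>v\<in>V. \<exists>\<xi>. \<xi> \<in> Field r \<and> (\<forall>x\<in>X. g x = v \<longrightarrow> \<not> oless r \<xi> x)"
  proof
    fix v assume "v \<in> V"
    hence "\<not> unb r {x\<in>X. g x = v}" using NT by blast
    thus "\<exists>\<xi>. \<xi> \<in> Field r \<and> (\<forall>x\<in>X. g x = v \<longrightarrow> \<not> oless r \<xi> x)" unfolding unb_def by blast
  qed
  then obtain bd where bd: "\<forall>v\<in>V. bd v \<in> Field r \<and> (\<forall>x\<in>X. g x = v \<longrightarrow> \<not> oless r (bd v) x)"
    by (rule bchoice[elim_format]) blast
  have "|bd ` V| <o r" using card_of_image V ordLeq_ordLess_trans by blast
  then obtain a where a: "a \<in> Field r" "\<forall>v\<in>V. (bd v, a) \<in> r"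
    using bound[of "bd ` V"] bd by blast
  obtain x where x: "x \<in> X" "oless r a x" using X a unfolding unb_def by blast
  have "g x \<in> V" using g x by blast
  thus False using bd a x oless_trans1 by blast
qed

lemma unb_strict: "(\<forall>\<gamma>\<in>Field r. \<exists>\<alpha>\<in>I. (\<gamma>, \<alpha>) \<in> r) \<Longrightarrow> unb r I"
  unfolding unb_def
proof
  fix \<xi> assume H: "\<forall>\<gamma>\<in>Field r. \<exists>\<alpha>\<in>I. (\<gamma>, \<alpha>) \<in> r" and x: "\<xi> \<in> Field r"
  obtain \<xi>' where "oless r \<xi> \<xi>'" using no_max x by blast
  moreover then obtain \<alpha> where "\<alpha> \<in> I" "(\<xi>',\<alpha>) \<in> r" using H oless_Field by blast
  ultimately show "\<exists>x\<in>I. oless r \<xi> x" using oless_trans2 by blast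
qed

end

theorem mainTheorem5:
  fixes r :: "'a rel"
  assumes "Card_order r" and "Cinfinite r" and "regularCard r"
    and "weakly_compact r"
  shows "strong_system_property r"
  unfolding strong_system_property_def
proof (intro allI impI)
  interpret cardctx r using assms by unfold_locales auto
  note WC = assms(4)
  fix I k and RR :: "(('a\<times>'a) rel) set"
  assume "strong_system r I k RR \<and> cardSuc |RR| <o r"
  hence SS: "strong_system r I k RR" by blast
  note SSu = SS[unfolded strong_system_def]
  have Isub: "I \<subseteq> Field r" using conjunct1[OF SSu] .
  have Iunb0: "\<forall>\<gamma>\<in>Field r. \<exists>\<alpha>\<in>I. (\<gamma>,\<alpha>)\<in>r" using conjunct1[OF conjunct2[OF SSu]] .
  have kF: "k \<in> Field r" using conjunct1[OF conjunct2[OF conjunct2[OF SSu]]] .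
  have kne: "underS r k \<noteq> {}" using conjunct1[OF conjunct2[OF conjunct2[OF conjunct2[OF SSu]]]] .
  have RRs: "|RR| <o r" using conjunct1[OF conjunct2[OF conjunct2[OF conjunct2[OF conjunct2[OF conjunct2[OF SSu]]]]]] .
  have RRp0: "\<forall>R\<in>RR. R \<subseteq> (I \<times> underS r k) \<times> (I \<times> underS r k) \<and> trans R \<and> tree_like R \<and>
        (\<forall>x y. (x, y) \<in> R \<longrightarrow> oless r (fst x) (fst y))"
    using conjunct1[OF conjunct2[OF conjunct2[OF conjunct2[OF conjunct2[OF conjunct2[OF conjunct2[OF SSu]]]]]]] .
  have RRp: "\<forall>R\<in>RR. tree_like R" using RRp0 by blast
  have STR: "\<forall>\<alpha>0\<in>I. \<forall>\<alpha>1\<in>I. oless r \<alpha>0 \<alpha>1 \<longrightarrow> (\<forall>\<beta>1\<in>underS r k.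
        (\<exists>\<beta>0\<in>underS r k. \<exists>R\<in>RR. ((\<alpha>0, \<beta>0), (\<alpha>1, \<beta>1)) \<in> R))"
    using conjunct2[OF conjunct2[OF conjunct2[OF conjunct2[OF conjunct2[OF conjunct2[OF conjunct2[OF conjunct2[OF SSu]]]]]]]] .
  obtain k0 where k0: "k0 \<in> underS r k" using kne by blast
  have unbI: "unb r I" using unb_strict[OF Iunb0] .
  obtain \<alpha>a where \<alpha>a: "\<alpha>a \<in> I" "oless r k \<alpha>a" using unbI kF unfolding unb_def by blast
  obtain \<alpha>b where \<alpha>b: "\<alpha>b \<in> I" "oless r \<alpha>a \<alpha>b" using unbI \<alpha>a Isub unfolding unb_def by blast
  have RRne: "RR \<noteq> {}" using STR \<alpha>a \<alpha>b k0 by blast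
  define V where "V = RR \<times> underS r k"
  have Vs: "|V| <o r" unfolding V_def
    using times_small[OF _ CO RRs card_of_underS[OF CO kF] RRne kne] CI unfolding cinfinite_def by blast
  define Pp where "Pp \<gamma> \<beta> p \<longleftrightarrow> fst p \<in> RR \<and> snd p \<in> underS r k \<and> ((\<gamma>, snd p), (\<beta>, k0)) \<in> fst p" for \<gamma> \<beta> p
  define w where "w \<beta> \<gamma> = (SOME p. Pp \<gamma> \<beta> p)" for \<beta> \<gamma>
  have wP: "Pp \<gamma> \<beta> (w \<beta> \<gamma>)" if wh: "\<gamma>\<in>I" "\<beta>\<in>I" "oless r \<gamma> \<beta>" for \<gamma> \<beta>
  proof -
    obtain b0 R where "b0 \<in> underS r k" "R \<in> RR" "((\<gamma>, b0), (\<beta>, k0)) \<in> R"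
      using STR wh k0 by blast
    hence "Pp \<gamma> \<beta> (R, b0)" unfolding Pp_def by simp
    thus ?thesis unfolding w_def by (rule someI)
  qed
  from well_ordering[where 'a="(('a\<times>'a) rel) \<times> 'a"]
  obtain W :: "((('a\<times>'a) rel) \<times> 'a) rel" where W: "Well_order W" "Field W = UNIV"
    by (elim exE conjE)
  have Wanti: "antisym W" using W unfolding well_order_on_def linear_order_on_def partial_order_on_def by blast
  have Wtot: "(p,q)\<in>W \<or> (q,p)\<in>W" if "p \<noteq> q" for p q
    using W that unfolding well_order_on_def linear_order_on_def total_on_def by blast
  define lexless where "lexless \<alpha> \<beta> \<longleftrightarrow> (\<exists>\<delta>\<in>I. oless r \<delta> \<alpha> \<and> w \<alpha> \<delta> \<noteq> w \<beta> \<delta> \<and>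
      (\<forall>\<delta>'\<in>I. oless r \<delta>' \<delta> \<longrightarrow> w \<alpha> \<delta>' = w \<beta> \<delta>') \<and> (w \<alpha> \<delta>, w \<beta> \<delta>) \<in> W)" for \<alpha> \<beta>
  define f where "f S \<longleftrightarrow> (\<exists>x y. S = {x,y} \<and> oless r x y \<and> lexless x y)" for S
  have feq: "f {x,y} = lexless x y" if "oless r x y" for x y
  proof
    assume "f {x,y}"
    then obtain x' y' where xy: "{x,y} = {x',y'}" "oless r x' y'" "lexless x' y'" unfolding f_def by blast
    have "x' = x \<and> y' = y \<or> x' = y \<and> y' = x" using xy(1) by (auto simp: doubleton_eq_iff)
    moreover have "\<not> (x' = y \<and> y' = x)" using that xy(2) rantisym unfolding oless_def by blast
    ultimately show "lexless x y" using xy by blast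
  next
    assume "lexless x y" thus "f {x,y}" unfolding f_def using that by blast
  qed
  have cofI: "cofinal I r" using unbI unfolding unb_def cofinal_def oless_def by blast
  have Icard: "|I| =o r" using REG Isub cofI unfolding regularCard_def by blast
  have "|Field r| =o |I|"
    using card_of_Field_ordIso[OF CO] Icard ordIso_symmetric ordIso_transitive by blast
  then obtain h where h: "bij_betw h (Field r) I" using card_of_ordIso by blast
  obtain H0 c0 where H0: "H0 \<subseteq> Field r" "|H0| =o r"
    and hom0: "\<forall>x\<in>H0. \<forall>y\<in>H0. x \<noteq> y \<longrightarrow> f (h ` {x, y}) = c0"
  proof -
    have WC': "\<forall>g :: 'a set \<Rightarrow> bool. \<exists>H. H \<subseteq> Field r \<and> |H| =o r \<and> (\<exists>c. \<forall>x\<in>H. \<forall>y\<in>H. x \<noteq> y \<longrightarrow> g {x, y} = c)"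
      using conjunct2[OF conjunct2[OF WC[unfolded weakly_compact_def]]] .
    have "\<exists>H. H \<subseteq> Field r \<and> |H| =o r \<and> (\<exists>c. \<forall>x\<in>H. \<forall>y\<in>H. x \<noteq> y \<longrightarrow> f (h ` {x, y}) = c)"
      using spec[OF WC', of "\<lambda>S. f (h ` S)"] by simp
    thus ?thesis using that by blast
  qed
  define H where "H = h ` H0"
  have HI: "H \<subseteq> I" unfolding H_def using H0 h unfolding bij_betw_def by blast
  have HF: "H \<subseteq> Field r" using HI Isub by blast
  have injH0: "inj_on h H0" using h H0 unfolding bij_betw_def by (meson inj_on_subset)
  have "|H0| =o |H|" unfolding H_def using injH0 card_of_ordIso bij_betw_imageI by blast
  hence Hcard: "|H| =o r" using H0 ordIso_symmetric ordIso_transitive by blast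
  have hom: "f {x,y} = c0" if hh: "x\<in>H" "y\<in>H" "x\<noteq>y" for x y
  proof -
    obtain x0 y0 where "x0\<in>H0" "y0\<in>H0" "x = h x0" "y = h y0" using hh unfolding H_def by blast
    moreover hence "x0 \<noteq> y0" using hh by blast
    ultimately show ?thesis using hom0 by auto
  qed
  have unbH: "unb r H" using unb_card[OF HF Hcard] .
  have col: "lexless \<alpha> \<beta> = c0" if "\<alpha>\<in>H" "\<beta>\<in>H" "oless r \<alpha> \<beta>" for \<alpha> \<beta>
    using hom[of \<alpha> \<beta>] feq[of \<alpha> \<beta>] that unfolding oless_def by auto
  define Ord where "Ord = (if c0 then W else W\<inverse>)"
  have Oanti: "antisym Ord" unfolding Ord_def using Wanti unfolding antisym_def by auto
  have mono: "(w \<alpha> \<gamma>, w \<beta> \<gamma>) \<in> Ord \<or> w \<alpha> \<gamma> = w \<beta> \<gamma>"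
    if m: "\<alpha>\<in>H" "\<beta>\<in>H" "oless r \<alpha> \<beta>" "\<gamma>\<in>I" "oless r \<gamma> \<alpha>"
       "\<forall>\<delta>\<in>I. oless r \<delta> \<gamma> \<longrightarrow> w \<alpha> \<delta> = w \<beta> \<delta>" for \<alpha> \<beta> \<gamma>
  proof (rule disjCI)
    assume ne: "w \<alpha> \<gamma> \<noteq> w \<beta> \<gamma>"
    show "(w \<alpha> \<gamma>, w \<beta> \<gamma>) \<in> Ord"
    proof (cases c0)
      case True
      hence "lexless \<alpha> \<beta>" using col m by blast
      then obtain \<delta> where d: "\<delta>\<in>I" "oless r \<delta> \<alpha>" "w \<alpha> \<delta> \<noteq> w \<beta> \<delta>"
        "\<forall>\<delta>'\<in>I. oless r \<delta>' \<delta> \<longrightarrow> w \<alpha> \<delta>' = w \<beta> \<delta>'" "(w \<alpha> \<delta>, w \<beta> \<delta>) \<in> W"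
        unfolding lexless_def by blast
      have "\<not> oless r \<delta> \<gamma>" using d m by blast
      moreover have "\<not> oless r \<gamma> \<delta>" using d m ne by blast
      moreover have "\<delta> \<in> Field r" "\<gamma> \<in> Field r" using d m Isub by auto
      ultimately have "\<delta> = \<gamma>" using not_oless rantisym by blast
      thus ?thesis using d True unfolding Ord_def by simp
    next
      case False
      hence nl: "\<not> lexless \<alpha> \<beta>" using col m by blast
      have "(w \<alpha> \<gamma>, w \<beta> \<gamma>) \<notin> W"
      proof
        assume "(w \<alpha> \<gamma>, w \<beta> \<gamma>) \<in> W"
        hence "lexless \<alpha> \<beta>" unfolding lexless_def using m ne by blast
        thus False using nl by blast
      qed
      hence "(w \<beta> \<gamma>, w \<alpha> \<gamma>) \<in> W" using Wtot ne by blast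
      thus ?thesis using False unfolding Ord_def by simp
    qed
  qed
  have wor: "wo_rel r" unfolding wo_rel_def using WO .
  define Q where "Q \<gamma> \<longleftrightarrow> (\<exists>v. \<exists>\<theta>\<in>Field r. \<forall>\<beta>\<in>H. oless r \<theta> \<beta> \<longrightarrow> oless r \<gamma> \<beta> \<and> w \<beta> \<gamma> = v)" for \<gamma>
  have EV: "\<gamma> \<in> I \<longrightarrow> Q \<gamma>" for \<gamma>
  proof (rule wo_rel.well_order_induct[OF wor, of "\<lambda>\<gamma>. \<gamma> \<in> I \<longrightarrow> Q \<gamma>"])
    fix \<gamma> assume IH: "\<forall>y. y \<noteq> \<gamma> \<and> (y,\<gamma>) \<in> r \<longrightarrow> (y \<in> I \<longrightarrow> Q y)"
    show "\<gamma> \<in> I \<longrightarrow> Q \<gamma>"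
    proof
      assume gI: "\<gamma> \<in> I"
      have gF: "\<gamma> \<in> Field r" using gI Isub by blast
      define D where "D = {\<delta>\<in>I. oless r \<delta> \<gamma>}"
      have "\<forall>\<delta>\<in>D. \<exists>p. snd p \<in> Field r \<and> (\<forall>\<beta>\<in>H. oless r (snd p) \<beta> \<longrightarrow> oless r \<delta> \<beta> \<and> w \<beta> \<delta> = fst p)"
      proof
        fix \<delta> assume "\<delta>\<in>D"
        hence "Q \<delta>" using IH unfolding D_def oless_def by blast
        then obtain v \<theta> where "\<theta>\<in>Field r" "\<forall>\<beta>\<in>H. oless r \<theta> \<beta> \<longrightarrow> oless r \<delta> \<beta> \<and> w \<beta> \<delta> = v"
          unfolding Q_def by blast
        thus "\<exists>p. snd p \<in> Field r \<and> (\<forall>\<beta>\<in>H. oless r (snd p) \<beta> \<longrightarrow> oless r \<delta> \<beta> \<and> w \<beta> \<delta> = fst p)"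
          by (intro exI[of _ "(v,\<theta>)"]) simp
      qed
      then obtain pp where pp: "\<forall>\<delta>\<in>D. snd (pp \<delta>) \<in> Field r \<and> (\<forall>\<beta>\<in>H. oless r (snd (pp \<delta>)) \<beta> \<longrightarrow> oless r \<delta> \<beta> \<and> w \<beta> \<delta> = fst (pp \<delta>))"
        by (rule bchoice[elim_format]) blast
      define th where "th \<delta> = snd (pp \<delta>)" for \<delta>
      have Dsub: "D \<subseteq> underS r \<gamma>" unfolding D_def underS_def oless_def by blast
      have "|th ` D| \<le>o |D|" by (rule card_of_image)
      moreover have "|D| \<le>o |underS r \<gamma>|" by (rule card_of_mono1[OF Dsub])
      moreover have "|underS r \<gamma>| <o r" by (rule card_of_underS[OF CO gF])
      ultimately have "|th ` D| <o r" using ordLeq_transitive ordLeq_ordLess_trans by blast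
      moreover have "th ` D \<subseteq> Field r" using pp unfolding th_def by blast
      ultimately obtain a1 where a1: "a1 \<in> Field r" "\<forall>b\<in>th`D. (b,a1)\<in>r" using bound by blast
      obtain \<theta>s where \<theta>s: "\<theta>s \<in> Field r" "(a1,\<theta>s)\<in>r" "(\<gamma>,\<theta>s)\<in>r" using rmax[OF a1(1) gF] by blast
      have thle: "(th \<delta>, \<theta>s) \<in> r" if "\<delta>\<in>D" for \<delta> using that a1 \<theta>s rtrans by blast
      define X where "X = {\<beta>\<in>H. oless r \<theta>s \<beta>}"
      have XF: "X \<subseteq> Field r" using HF unfolding X_def by blast
      have unbX: "unb r X" unfolding unb_def
      proof
        fix \<xi> assume "\<xi> \<in> Field r"
        then obtain m where m: "m \<in> Field r" "(\<xi>,m)\<in>r" "(\<theta>s,m)\<in>r" using rmax \<theta>s by blast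
        then obtain \<beta> where "\<beta> \<in> H" "oless r m \<beta>" using unbH unfolding unb_def by blast
        thus "\<exists>x\<in>X. oless r \<xi> x" unfolding X_def using m oless_trans1 by blast
      qed
      have agree: "w \<beta> \<delta> = fst (pp \<delta>)" if "\<beta> \<in> X" "\<delta> \<in> I" "oless r \<delta> \<gamma>" for \<beta> \<delta>
      proof -
        have dD: "\<delta> \<in> D" unfolding D_def using that by blast
        have "oless r (th \<delta>) \<beta>" using thle[OF dD] that(1) oless_trans1 unfolding X_def by blast
        thus ?thesis using pp dD that(1) unfolding X_def th_def by blast
      qed
      have gtg: "oless r \<gamma> \<beta>" if "\<beta> \<in> X" for \<beta> using that \<theta>s(3) oless_trans1 unfolding X_def by blast
      have gV: "(\<lambda>\<beta>. w \<beta> \<gamma>) ` X \<subseteq> V"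
      proof
        fix p assume "p \<in> (\<lambda>\<beta>. w \<beta> \<gamma>) ` X"
        then obtain \<beta> where b: "\<beta> \<in> X" "p = w \<beta> \<gamma>" by blast
        have "\<beta> \<in> I" using b HI unfolding X_def by blast
        hence "Pp \<gamma> \<beta> p" using wP[OF gI _ gtg[OF b(1)]] b by blast
        thus "p \<in> V" unfolding Pp_def V_def by (cases p) auto
      qed
      obtain v where v: "v\<in>V" "unb r {\<beta>\<in>X. w \<beta> \<gamma> = v}" using pigeon[OF unbX XF gV Vs] by blast
      obtain \<alpha>0 where \<alpha>0: "\<alpha>0 \<in> X" "w \<alpha>0 \<gamma> = v" using v(2) \<theta>s(1) unfolding unb_def by blast
      have a0H: "\<alpha>0 \<in> H" using \<alpha>0 unfolding X_def by blast
      have a0F: "\<alpha>0 \<in> Field r" using a0H HF by blast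
      have main: "\<forall>\<beta>\<in>H. oless r \<alpha>0 \<beta> \<longrightarrow> oless r \<gamma> \<beta> \<and> w \<beta> \<gamma> = v"
      proof (intro ballI impI)
        fix \<beta> assume bH: "\<beta>\<in>H" and ab: "oless r \<alpha>0 \<beta>"
        have "(\<theta>s, \<alpha>0) \<in> r" using \<alpha>0 unfolding X_def oless_def by blast
        hence bX: "\<beta> \<in> X" using bH ab oless_trans1 unfolding X_def by blast
        have bF: "\<beta> \<in> Field r" using bH HF by blast
        obtain \<alpha>1 where \<alpha>1: "\<alpha>1 \<in> X" "w \<alpha>1 \<gamma> = v" "oless r \<beta> \<alpha>1" using v(2) bF unfolding unb_def by blast
        have a1H: "\<alpha>1 \<in> H" using \<alpha>1 unfolding X_def by blast
        have m1: "(w \<alpha>0 \<gamma>, w \<beta> \<gamma>) \<in> Ord \<or> w \<alpha>0 \<gamma> = w \<beta> \<gamma>"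
          by (rule mono[OF a0H bH ab gI gtg[OF \<alpha>0(1)]]) (simp add: agree[OF \<alpha>0(1)] agree[OF bX])
        have m2: "(w \<beta> \<gamma>, w \<alpha>1 \<gamma>) \<in> Ord \<or> w \<beta> \<gamma> = w \<alpha>1 \<gamma>"
          by (rule mono[OF bH a1H \<alpha>1(3) gI gtg[OF bX]]) (simp add: agree[OF \<alpha>1(1)] agree[OF bX])
        have "w \<beta> \<gamma> = v" using m1 m2 \<alpha>0(2) \<alpha>1(2) Oanti unfolding antisym_def by metis
        thus "oless r \<gamma> \<beta> \<and> w \<beta> \<gamma> = v" using gtg[OF bX] by blast
      qed
      show "Q \<gamma>" unfolding Q_def using main a0F by blast
    qed
  qed
  have "\<forall>\<gamma>\<in>I. \<exists>p. snd p \<in> Field r \<and> (\<forall>\<beta>\<in>H. oless r (snd p) \<beta> \<longrightarrow> oless r \<gamma> \<beta> \<and> w \<beta> \<gamma> = fst p)"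
  proof
    fix \<gamma> assume "\<gamma> \<in> I"
    hence "Q \<gamma>" using EV by blast
    then obtain v \<theta> where "\<theta>\<in>Field r" "\<forall>\<beta>\<in>H. oless r \<theta> \<beta> \<longrightarrow> oless r \<gamma> \<beta> \<and> w \<beta> \<gamma> = v"
      unfolding Q_def by blast
    thus "\<exists>p. snd p \<in> Field r \<and> (\<forall>\<beta>\<in>H. oless r (snd p) \<beta> \<longrightarrow> oless r \<gamma> \<beta> \<and> w \<beta> \<gamma> = fst p)"
      by (intro exI[of _ "(v,\<theta>)"]) simp
  qed
  then obtain pe where pe: "\<forall>\<gamma>\<in>I. snd (pe \<gamma>) \<in> Field r \<and> (\<forall>\<beta>\<in>H. oless r (snd (pe \<gamma>)) \<beta> \<longrightarrow> oless r \<gamma> \<beta> \<and> w \<beta> \<gamma> = fst (pe \<gamma>))"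
    by (rule bchoice[elim_format]) blast
  define ev where "ev \<gamma> = fst (pe \<gamma>)" for \<gamma>
  define thr where "thr \<gamma> = snd (pe \<gamma>)" for \<gamma>
  have thrF: "thr \<gamma> \<in> Field r" if "\<gamma> \<in> I" for \<gamma> using pe that unfolding thr_def by blast
  have evP: "Pp \<gamma> \<beta> (ev \<gamma>)" if "\<gamma> \<in> I" "\<beta> \<in> H" "oless r (thr \<gamma>) \<beta>" for \<gamma> \<beta>
  proof -
    have "oless r \<gamma> \<beta> \<and> w \<beta> \<gamma> = ev \<gamma>" using pe that unfolding thr_def ev_def by blast
    moreover have "\<beta> \<in> I" using that HI by blast
    ultimately show ?thesis using wP[OF that(1)] by metis
  qed
  have evH: "\<exists>\<beta>\<in>H. oless r (thr \<gamma>) \<beta>" if "\<gamma> \<in> I" for \<gamma>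
    using unbH thrF[OF that] unfolding unb_def by blast
  have evV: "(\<lambda>\<gamma>. fst (ev \<gamma>)) ` I \<subseteq> RR"
  proof
    fix R assume "R \<in> (\<lambda>\<gamma>. fst (ev \<gamma>)) ` I"
    then obtain \<gamma> where g: "\<gamma> \<in> I" "R = fst (ev \<gamma>)" by blast
    obtain \<beta> where "\<beta>\<in>H" "oless r (thr \<gamma>) \<beta>" using evH[OF g(1)] by blast
    thus "R \<in> RR" using evP[OF g(1)] g unfolding Pp_def by blast
  qed
  obtain R where R: "R \<in> RR" "unb r {\<gamma>\<in>I. fst (ev \<gamma>) = R}" using pigeon[OF unbI Isub evV RRs] by blast
  define \<Gamma> where "\<Gamma> = {\<gamma>\<in>I. fst (ev \<gamma>) = R}"
  define b where "b = (\<lambda>\<gamma>. (\<gamma>, snd (ev \<gamma>))) ` \<Gamma>"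
  have tl: "tree_like R" using RRp R(1) by blast
  have "cofinal_branch r I k R b"
    unfolding cofinal_branch_def
  proof (intro conjI ballI)
    show "b \<subseteq> I \<times> underS r k"
    proof
      fix x assume "x \<in> b"
      then obtain \<gamma> where g: "\<gamma> \<in> \<Gamma>" "x = (\<gamma>, snd (ev \<gamma>))" unfolding b_def by blast
      have gI: "\<gamma> \<in> I" using g \<Gamma>_def by blast
      obtain \<beta> where "\<beta>\<in>H" "oless r (thr \<gamma>) \<beta>" using evH[OF gI] by blast
      hence "snd (ev \<gamma>) \<in> underS r k" using evP[OF gI] unfolding Pp_def by blast
      thus "x \<in> I \<times> underS r k" using g gI by blast
    qed
  next
    fix x y assume "x \<in> b" "y \<in> b"
    then obtain \<gamma> \<gamma>' where g: "\<gamma> \<in> \<Gamma>" "x = (\<gamma>, snd (ev \<gamma>))" "\<gamma>' \<in> \<Gamma>" "y = (\<gamma>', snd (ev \<gamma>'))"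
      unfolding b_def by blast
    have gI: "\<gamma> \<in> I" "\<gamma>' \<in> I" using g \<Gamma>_def by blast+
    obtain m where m: "m \<in> Field r" "(thr \<gamma>, m) \<in> r" "(thr \<gamma>', m) \<in> r"
      using rmax[OF thrF[OF gI(1)] thrF[OF gI(2)]] by blast
    obtain \<beta> where bt: "\<beta> \<in> H" "oless r m \<beta>" using unbH m(1) unfolding unb_def by blast
    have "Pp \<gamma> \<beta> (ev \<gamma>)" using evP[OF gI(1) bt(1)] oless_trans1[OF m(2) bt(2)] by blast
    hence 1: "(x, (\<beta>, k0)) \<in> R" using g \<Gamma>_def unfolding Pp_def by auto
    have "Pp \<gamma>' \<beta> (ev \<gamma>')" using evP[OF gI(2) bt(1)] oless_trans1[OF m(3) bt(2)] by blast
    hence 2: "(y, (\<beta>, k0)) \<in> R" using g \<Gamma>_def unfolding Pp_def by auto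
    show "x = y \<or> (x, y) \<in> R \<or> (y, x) \<in> R" using tl 1 2 unfolding tree_like_def by blast
  next
    fix \<xi> assume "\<xi> \<in> Field r"
    then obtain \<gamma> where "\<gamma> \<in> \<Gamma>" "oless r \<xi> \<gamma>" using R(2) unfolding unb_def \<Gamma>_def by blast
    thus "\<exists>x\<in>b. (\<xi>, fst x) \<in> r" unfolding b_def oless_def by force
  qed
  thus "\<exists>R\<in>RR. \<exists>b. cofinal_branch r I k R b" using R(1) by blast
qed
end
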